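(* Let $\{A,S_0,\Pi_0\}$ be an admissible triple with $\pm\mathrm{i}\notin\sigma(A)$, and write $\Pi_0=\begin{bmatrix}\vartheta_1&\vartheta_2\end{bmatrix}$. Then for all $k\ge0$ $$\Pi_k=\begin{bmatrix}(I_n+\mathrm{i} A^{-1})^k\vartheta_1 & (I_n-\mathrm{i} A^{-1})^k\vartheta_2\end{bmatrix},$$ and with $R_k:=(I_n+\mathrm{i} A^{-1})^{-k}S_k\big(I_n-\mathrm{i}(A^* )^{-1}\big)^{-k}$ and $Q_k:=(I_n-\mathrm{i} A^{-1})^{-k}S_k\big(I_n+\mathrm{i}(A^* )^{-1}\big)^{-k}$ one has $$R_{k+1}-R_k=2(I_n+\mathrm{i} A^{-1})^{-k-1}A^{-1}(I_n-\mathrm{i} A^{-1})^k\vartheta_2\vartheta_2^*\big((I_n-\mathrm{i} A^{-1})^k\big)^*(A^{-1})^*\big((I_n+\mathrm{i} A^{-1})^{-k-1}\big)^*\ge0,$$ and $Q_{k+1}-Q_k\ge0$. Consequently the limits $\varkappa_R:=\lim_{k\to\infty}R_k^{-1}\ge0$ and $\varkappa_Q:=\lim_{k\to\infty}Q_k^{-1}\ge0$ exist.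
   Context: Fix positive integers $m_1,m_2$, $m=m_1+m_2$, $j=\mathrm{diag}(I_{m_1},-I_{m_2})$, $n\in\mathbb{N}$. An admissible triple (self-adjoint case) consists of an $n\times n$ matrix $A$ with $\det A\ne0$, an $n\times n$ matrix $S_0>0$, and an $n\times m$ matrix $\Pi_0$ with $AS_0-S_0A^*=\mathrm{i}\,\Pi_0j\Pi_0^*$; $\vartheta_1,\vartheta_2$ are the $n\times m_1$ and $n\times m_2$ blocks of $\Pi_0$. The sequences are defined for $k\ge0$ by $\Pi_{k+1}=\Pi_k+\mathrm{i} A^{-1}\Pi_k j$ and $S_{k+1}=S_k+A^{-1}S_k(A^* )^{-1}+A^{-1}\Pi_k\Pi_k^*(A^* )^{-1}$ (so $S_k>0$ and $AS_k-S_kA^*=\mathrm{i}\Pi_kj\Pi_k^*$ for all $k$). $\sigma(A)$ is the spectrum of $A$. *)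

theory Defs
  imports "HOL-Analysis.Analysis"
begin

text \<open>Complex matrices are rendered as complex^'c::finite^'r::finite (r rows, c columns, type-indexed
dimensions). Matrix product is (**), identity is mat 1, inverse is matrix_inv.\<close>

definition cmat_adj :: "complex^'c::finite^'r::finite \<Rightarrow> complex^'r::finite^'c::finite" where
  "cmat_adj M = (\<chi> i j. cnj (M $ j $ i))"

definition cmat_smult :: "complex \<Rightarrow> complex^'c::finite^'r::finite \<Rightarrow> complex^'c::finite^'r::finite" where
  "cmat_smult c M = (\<chi> i j. c * M $ i $ j)"

primrec cmat_pow :: "complex^'n::finite^'n \<Rightarrow> nat \<Rightarrow> complex^'n::finite^'n" where
  "cmat_pow M 0 = mat 1"
| "cmat_pow M (Suc k) = cmat_pow M k ** M"

definition hermitian :: "complex^'n::finite^'n \<Rightarrow> bool" where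
  "hermitian M \<longleftrightarrow> cmat_adj M = M"

definition pos_def :: "complex^'n::finite^'n \<Rightarrow> bool" where
  "pos_def M \<longleftrightarrow> hermitian M \<and> (\<forall>x. x \<noteq> 0 \<longrightarrow> Re (\<Sum>i\<in>UNIV. cnj (x $ i) * (M *v x) $ i) > 0 )"

definition pos_semidef :: "complex^'n::finite^'n \<Rightarrow> bool" where
  "pos_semidef M \<longleftrightarrow> hermitian M \<and> (\<forall>x. Re (\<Sum>i\<in>UNIV. cnj (x $ i) * (M *v x) $ i) \<ge> 0)"

definition cmat_spectrum :: "complex^'n::finite^'n \<Rightarrow> complex set" where
  "cmat_spectrum A = {z. det (A - cmat_smult z (mat 1)) = 0}"

definition jmat :: "complex^('m1::finite + 'm2::finite)^('m1::finite + 'm2::finite)" where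
  "jmat = (\<chi> a b. if a = b then (case a of Inl _ \<Rightarrow> 1 | Inr _ \<Rightarrow> -1) else 0)"

definition admissible_triple ::
  "complex^'n::finite^'n \<Rightarrow> complex^'n::finite^'n \<Rightarrow> complex^('m1::finite + 'm2::finite)^'n \<Rightarrow> bool" where
  "admissible_triple A S0 Pi0 \<longleftrightarrow> det A \<noteq> 0 \<and> pos_def S0 \<and>
     A ** S0 - S0 ** cmat_adj A = cmat_smult \<i> (Pi0 ** jmat ** cmat_adj Pi0)"

primrec Pi_seq :: "complex^'n::finite^'n \<Rightarrow> complex^('m1::finite + 'm2::finite)^'n \<Rightarrow> nat \<Rightarrow> complex^('m1::finite + 'm2::finite)^'n" where
  "Pi_seq A Pi0 0 = Pi0"
| "Pi_seq A Pi0 (Suc k) = Pi_seq A Pi0 k + cmat_smult \<i> (matrix_inv A ** Pi_seq A Pi0 k ** jmat)"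

primrec S_seq :: "complex^'n::finite^'n \<Rightarrow> complex^'n::finite^'n \<Rightarrow> complex^('m1::finite + 'm2::finite)^'n \<Rightarrow> nat \<Rightarrow> complex^'n::finite^'n" where
  "S_seq A S0 Pi0 0 = S0"
| "S_seq A S0 Pi0 (Suc k) = S_seq A S0 Pi0 k
     + matrix_inv A ** S_seq A S0 Pi0 k ** matrix_inv (cmat_adj A)
     + matrix_inv A ** Pi_seq A Pi0 k ** cmat_adj (Pi_seq A Pi0 k) ** matrix_inv (cmat_adj A)"

definition block1 :: "complex^('m1::finite + 'm2::finite)^'n \<Rightarrow> complex^'m1::finite^'n::finite" where
  "block1 P = (\<chi> r c. P $ r $ Inl c)"
definition block2 :: "complex^('m1::finite + 'm2::finite)^'n \<Rightarrow> complex^'m2::finite^'n::finite" where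
  "block2 P = (\<chi> r c. P $ r $ Inr c)"
definition join_blocks :: "complex^'m1::finite^'n::finite \<Rightarrow> complex^'m2::finite^'n::finite \<Rightarrow> complex^('m1::finite + 'm2::finite)^'n" where
  "join_blocks X Y = (\<chi> r c. case c of Inl a \<Rightarrow> X $ r $ a | Inr b \<Rightarrow> Y $ r $ b)"

definition Bp :: "complex^'n::finite^'n \<Rightarrow> complex^'n::finite^'n" where
  "Bp A = mat 1 + cmat_smult \<i> (matrix_inv A)"
definition Bm :: "complex^'n::finite^'n \<Rightarrow> complex^'n::finite^'n" where
  "Bm A = mat 1 - cmat_smult \<i> (matrix_inv A)"

definition R_seq :: "complex^'n::finite^'n \<Rightarrow> complex^'n::finite^'n \<Rightarrow> complex^('m1::finite + 'm2::finite)^'n \<Rightarrow> nat \<Rightarrow> complex^'n::finite^'n" where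
  "R_seq A S0 Pi0 k = matrix_inv (cmat_pow (Bp A) k) ** S_seq A S0 Pi0 k
      ** matrix_inv (cmat_pow (mat 1 - cmat_smult \<i> (matrix_inv (cmat_adj A))) k)"
definition Q_seq :: "complex^'n::finite^'n \<Rightarrow> complex^'n::finite^'n \<Rightarrow> complex^('m1::finite + 'm2::finite)^'n \<Rightarrow> nat \<Rightarrow> complex^'n::finite^'n" where
  "Q_seq A S0 Pi0 k = matrix_inv (cmat_pow (Bm A) k) ** S_seq A S0 Pi0 k
      ** matrix_inv (cmat_pow (mat 1 + cmat_smult \<i> (matrix_inv (cmat_adj A))) k)"

end

theory Submission
  imports Defs
begin



lemma matrix_add_rdistrib: "((A::'a::semiring_1^'n^'m) + B) ** C = A ** C + B ** C"
  by (vector matrix_matrix_mult_def sum.distrib[symmetric] field_simps)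
lemma matrix_sub_ldistrib: "(A::'a::ring_1^'n^'m) ** (B - C) = A ** B - A ** C"
  by (vector matrix_matrix_mult_def sum_subtractf[symmetric] field_simps)
lemma matrix_sub_rdistrib: "((A::'a::ring_1^'n^'m) - B) ** C = A ** C - B ** C"
  by (vector matrix_matrix_mult_def sum_subtractf[symmetric] field_simps)

lemma sm_mult_left: "cmat_smult c A ** B = cmat_smult c (A ** B)"
  by (simp add: cmat_smult_def matrix_matrix_mult_def vec_eq_iff sum_distrib_left mult.assoc)
lemma sm_mult_right: "A ** cmat_smult c B = cmat_smult c (A ** B)"
  by (simp add: cmat_smult_def matrix_matrix_mult_def vec_eq_iff sum_distrib_left algebra_simps)
lemma sm_sm: "cmat_smult c (cmat_smult d A) = cmat_smult (c*d) A"
  by (simp add: cmat_smult_def vec_eq_iff)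
lemma sm_add: "cmat_smult c (A + B) = cmat_smult c A + cmat_smult c B"
  by (simp add: cmat_smult_def vec_eq_iff algebra_simps)
lemma sm_diff: "cmat_smult c (A - B) = cmat_smult c A - cmat_smult c B"
  by (simp add: cmat_smult_def vec_eq_iff algebra_simps)
lemma sm_1[simp]: "cmat_smult 1 A = A"
  by (simp add: cmat_smult_def vec_eq_iff)
lemma sm_add_scal: "cmat_smult (c+d) A = cmat_smult c A + cmat_smult d A"
  by (simp add: cmat_smult_def vec_eq_iff algebra_simps)
lemma sm_neg: "cmat_smult (-c) A = - cmat_smult c A"
  by (simp add: cmat_smult_def vec_eq_iff algebra_simps)

lemma adj_sm: "cmat_adj (cmat_smult c A) = cmat_smult (cnj c) (cmat_adj A)"
  by (simp add: cmat_smult_def cmat_adj_def vec_eq_iff)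
lemma adj_mult: "cmat_adj (A ** B) = cmat_adj B ** cmat_adj A"
  by (simp add: cmat_adj_def matrix_matrix_mult_def vec_eq_iff mult.commute)
lemma adj_add: "cmat_adj (A + B) = cmat_adj A + cmat_adj B"
  by (simp add: cmat_adj_def vec_eq_iff)
lemma adj_diff: "cmat_adj (A - B) = cmat_adj A - cmat_adj B"
  by (simp add: cmat_adj_def vec_eq_iff)
lemma adj_adj[simp]: "cmat_adj (cmat_adj A) = A"
  by (simp add: cmat_adj_def vec_eq_iff)
lemma adj_mat1[simp]: "cmat_adj (mat 1) = mat 1"
  by (simp add: cmat_adj_def vec_eq_iff mat_def)

lemma inv_right: "invertible (A::'a::field^'n^'n) \<Longrightarrow> A ** matrix_inv A = mat 1"
  unfolding invertible_def matrix_inv_def by (rule someI2_ex) auto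
lemma inv_left: "invertible (A::'a::field^'n^'n) \<Longrightarrow> matrix_inv A ** A = mat 1"
  unfolding invertible_def matrix_inv_def by (rule someI2_ex) auto
lemma inv_unique: "(A::'a::field^'n^'n) ** B = mat 1 \<Longrightarrow> matrix_inv A = B"
proof -
  assume h: "A ** B = mat 1"
  then have i: "invertible A" using invertible_right_inverse by blast
  have "matrix_inv A = matrix_inv A ** (A ** B)" using h by simp
  also have "\<dots> = B" using inv_left[OF i] by (simp add: matrix_mul_assoc)
  finally show ?thesis .
qed
lemma invertible_inv: "invertible (A::'a::field^'n^'n) \<Longrightarrow> invertible (matrix_inv A)"
  using inv_left invertible_right_inverse by blast
lemma inv_inv: "invertible (A::'a::field^'n^'n) \<Longrightarrow> matrix_inv (matrix_inv A) = A"
  using inv_left inv_unique by blast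
lemma inv_mult: "invertible (A::'a::field^'n^'n) \<Longrightarrow> invertible (B::'a^'n^'n) \<Longrightarrow>
   matrix_inv (A ** B) = matrix_inv B ** matrix_inv A"
  apply (rule inv_unique)
  by (metis inv_right matrix_mul_assoc matrix_mul_rid)

lemma adj_invertible: "invertible (A::complex^'n^'n) \<Longrightarrow> invertible (cmat_adj A)"
  by (metis adj_mult adj_mat1 inv_right invertible_left_inverse)
lemma inv_adj: "invertible (A::complex^'n^'n) \<Longrightarrow> matrix_inv (cmat_adj A) = cmat_adj (matrix_inv A)"
  by (metis adj_mult adj_mat1 inv_left inv_unique)

lemma pow_commute: "cmat_pow M k ** M = M ** cmat_pow M k"
  by (induction k) (simp_all, metis matrix_mul_assoc)
lemma invertible_pow: "invertible M \<Longrightarrow> invertible (cmat_pow M k)"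
  by (induction k) (simp_all add: invertible_mult, metis invertible_def matrix_mul_lid)
lemma adj_pow: "cmat_pow (cmat_adj M) k = cmat_adj (cmat_pow M k)"
  by (induction k) (simp_all add: adj_mult pow_commute)




definition cdot :: "complex^'n::finite \<Rightarrow> complex^'n \<Rightarrow> complex" where
  "cdot u v = (\<Sum>i\<in>UNIV. cnj (u$i) * v$i)"

lemma pos_def_cdot: "pos_def M \<longleftrightarrow> hermitian M \<and> (\<forall>x. x \<noteq> 0 \<longrightarrow> Re (cdot x (M *v x)) > 0)"
  by (simp add: pos_def_def cdot_def)
lemma pos_semidef_cdot: "pos_semidef M \<longleftrightarrow> hermitian M \<and> (\<forall>x. Re (cdot x (M *v x)) \<ge> 0)"
  by (simp add: pos_semidef_def cdot_def)

lemma cdot_mv: "cdot u ((M::complex^'m::finite^'n::finite) *v w) = cdot (cmat_adj M *v u) w"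
proof -
  have "cdot u (M *v w) = (\<Sum>i\<in>UNIV. \<Sum>j\<in>UNIV. cnj (u$i) * M$i$j * w$j)"
    by (simp add: cdot_def matrix_vector_mult_def sum_distrib_left mult.assoc)
  also have "\<dots> = (\<Sum>j\<in>UNIV. \<Sum>i\<in>UNIV. cnj (u$i) * M$i$j * w$j)"
    by (rule sum.swap)
  also have "\<dots> = cdot (cmat_adj M *v u) w"
    by (simp add: cdot_def matrix_vector_mult_def cmat_adj_def sum_distrib_right sum_distrib_left mult_ac)
  finally show ?thesis .
qed

lemma cdot_add_left: "cdot (u + v) w = cdot u w + cdot v w"
  by (simp add: cdot_def sum.distrib algebra_simps)
lemma cdot_add_right: "cdot w (u + v) = cdot w u + cdot w v"
  by (simp add: cdot_def sum.distrib algebra_simps)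
lemma cdot_diff_left: "cdot (u - v) w = cdot u w - cdot v w"
  by (simp add: cdot_def sum_subtractf algebra_simps)
lemma cdot_diff_right: "cdot w (u - v) = cdot w u - cdot w v"
  by (simp add: cdot_def sum_subtractf algebra_simps)
lemma cdot_scale_left: "cdot (c *s u) w = cnj c * cdot u w"
  by (simp add: cdot_def sum_distrib_left algebra_simps)
lemma cdot_scale_right: "cdot w (c *s u) = c * cdot w u"
  by (simp add: cdot_def sum_distrib_left algebra_simps)
lemma cnj_cdot: "cnj (cdot u v) = cdot v u"
  by (simp add: cdot_def mult.commute)

lemma cnj_mult_self: "cnj z * z = of_real ((cmod z)^2)"
  using complex_norm_square[of z] by (simp add: mult.commute)
lemma cdot_self: "cdot u u = of_real (\<Sum>i\<in>UNIV. (cmod (u$i))^2)"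
  unfolding cdot_def by (simp add: cnj_mult_self)
lemma cdot_self_ge: "Re (cdot u u) \<ge> 0"
  by (simp add: cdot_self sum_nonneg)
lemma cdot_self_pos: "u \<noteq> 0 \<Longrightarrow> Re (cdot u u) > 0"
proof -
  assume "u \<noteq> 0"
  then obtain i where "u$i \<noteq> 0" by (metis vec_eq_iff zero_index)
  then have "(cmod (u$i))^2 > 0" by simp
  moreover have "(cmod (u$i))^2 \<le> (\<Sum>i\<in>UNIV. (cmod (u$i))^2)"
    by (rule member_le_sum) auto
  ultimately have "0 < (\<Sum>i\<in>UNIV. (cmod (u$i))^2)" by linarith
  then show ?thesis by (simp add: cdot_self)
qed

lemma herm_adj: "hermitian M \<Longrightarrow> cmat_adj M = M"
  by (simp add: hermitian_def)

lemma herm_quad_real: "hermitian M \<Longrightarrow> cdot x (M *v x) = of_real (Re (cdot x (M *v x)))"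
proof -
  assume h: "hermitian M"
  have "cnj (cdot x (M *v x)) = cdot x (M *v x)"
    by (simp add: cnj_cdot cdot_mv herm_adj[OF h])
  then show ?thesis by (metis Reals_cnj_iff complex_is_Real_iff of_real_Re)
qed

lemma quad_congr: "cdot x ((C ** M ** cmat_adj C) *v x) = cdot (cmat_adj C *v x) (M *v (cmat_adj C *v x))"
  by (simp add: matrix_vector_mul_assoc[symmetric] cdot_mv)

lemma herm_congr: "hermitian M \<Longrightarrow> hermitian (C ** M ** cmat_adj C)"
  by (simp add: hermitian_def adj_mult matrix_mul_assoc)

lemma psd_congr: "pos_semidef M \<Longrightarrow> pos_semidef (C ** M ** cmat_adj C)"
  by (simp add: pos_semidef_cdot herm_congr quad_congr)

lemma pd_congr: fixes M C :: "complex^'n^'n"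
  shows "pos_def M \<Longrightarrow> invertible C \<Longrightarrow> pos_def (C ** M ** cmat_adj C)"
  unfolding pos_def_cdot
proof (intro conjI allI impI)
  assume h: "hermitian M \<and> (\<forall>x. x \<noteq> 0 \<longrightarrow> 0 < Re (cdot x (M *v x)))" and i: "invertible C"
  show "hermitian (C ** M ** cmat_adj C)" using h herm_congr by blast
  fix x :: "complex^'n" assume x: "x \<noteq> 0"
  have "cmat_adj C *v x \<noteq> 0"
  proof
    assume "cmat_adj C *v x = 0"
    then have "cmat_adj (matrix_inv C) *v (cmat_adj C *v x) = 0" by simp
    then show False using x inv_right[OF i]
      by (simp add: matrix_vector_mul_assoc adj_mult[symmetric])
  qed
  then show "0 < Re (cdot x ((C ** M ** cmat_adj C) *v x))" using h by (simp add: quad_congr)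
qed

lemma psd_gram: "pos_semidef (C ** cmat_adj C)"
proof -
  have "cdot x ((C ** cmat_adj C) *v x) = cdot (cmat_adj C *v x) (cmat_adj C *v x)" for x
    by (simp add: matrix_vector_mul_assoc[symmetric] cdot_mv[of x C])
  then show ?thesis unfolding pos_semidef_cdot hermitian_def
    by (simp add: adj_mult cdot_self_ge)
qed

lemma psd_smult: "pos_semidef M \<Longrightarrow> c \<ge> 0 \<Longrightarrow> pos_semidef (cmat_smult (of_real c) M)"
proof -
  assume "pos_semidef M" "c \<ge> 0"
  moreover have "cmat_smult (of_real c) M *v x = of_real c *s (M *v x)" for x
    by (simp add: cmat_smult_def matrix_vector_mult_def vec_eq_iff sum_distrib_left mult.assoc)
  ultimately show ?thesis
    by (simp add: pos_semidef_cdot hermitian_def adj_sm cdot_scale_right)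
qed

lemma psd_add: "pos_semidef M \<Longrightarrow> pos_semidef N \<Longrightarrow> pos_semidef (M + N)"
  by (simp add: pos_semidef_cdot hermitian_def adj_add matrix_vector_mult_add_rdistrib cdot_add_right)
lemma pd_add_psd: "pos_def M \<Longrightarrow> pos_semidef N \<Longrightarrow> pos_def (M + N)"
  unfolding pos_semidef_cdot pos_def_cdot hermitian_def
  by (simp add: adj_add matrix_vector_mult_add_rdistrib cdot_add_right add_pos_nonneg)

lemma herm_inv: "hermitian M \<Longrightarrow> invertible M \<Longrightarrow> hermitian (matrix_inv M)"
  by (metis hermitian_def inv_adj)

lemma pd_invertible: "pos_def (M::complex^'n^'n) \<Longrightarrow> invertible M"
proof -
  assume h: "pos_def M"
  have "inj ((*v) M)"
  proof (rule injI)
    fix x y assume "M *v x = M *v y"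
    then have "M *v (x - y) = 0" by (simp add: matrix_vector_mult_diff_distrib)
    then have "cdot (x - y) (M *v (x - y)) = 0" by (simp add: cdot_def)
    then show "x = y" using h unfolding pos_def_cdot by (metis zero_complex.simps(1) less_irrefl right_minus_eq)
  qed
  then show ?thesis using matrix_left_invertible_injective invertible_left_inverse by blast
qed

lemma pd_inv: "pos_def (M::complex^'n^'n) \<Longrightarrow> pos_def (matrix_inv M)"
proof -
  assume h: "pos_def M"
  have i: "invertible M" using pd_invertible[OF h] .
  have hi: "cmat_adj (matrix_inv M) = matrix_inv M"
    using herm_inv[OF _ i] h by (simp add: pos_def_cdot hermitian_def)
  have "matrix_inv M = matrix_inv M ** M ** cmat_adj (matrix_inv M)"
    by (simp add: hi inv_left[OF i])
  then show ?thesis using pd_congr[OF h invertible_inv[OF i]] by simp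
qed

lemma inv_antitone:
  fixes A B :: "complex^'n^'n"
  assumes A: "pos_def A" and B: "pos_def B" and BA: "pos_semidef (B - A)"
  shows "pos_semidef (matrix_inv A - matrix_inv B)"
proof -
  have iA: "invertible A" and iB: "invertible B" using A B pd_invertible by auto
  have hA: "cmat_adj A = A" and hB: "cmat_adj B = B" using A B by (auto simp: pos_def_cdot hermitian_def)
  have hiA: "cmat_adj (matrix_inv A) = matrix_inv A" and hiB: "cmat_adj (matrix_inv B) = matrix_inv B"
    using pd_inv[OF A] pd_inv[OF B] by (auto simp: pos_def_cdot hermitian_def)
  have herm: "hermitian (matrix_inv A - matrix_inv B)"
    by (simp add: hermitian_def adj_diff hiA hiB)
  have "Re (cdot x ((matrix_inv A - matrix_inv B) *v x)) \<ge> 0" for x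
  proof -
    define y where "y = matrix_inv B *v x"
    define a where "a = matrix_inv A *v x"
    have By: "B *v y = x" by (simp add: y_def matrix_vector_mul_assoc inv_right[OF iB])
    have Aa: "A *v a = x" by (simp add: a_def matrix_vector_mul_assoc inv_right[OF iA])
    have "0 \<le> Re (cdot (y - a) (A *v (y - a)))"
    proof (cases "y - a = 0")
      case True then show ?thesis by (simp add: cdot_def)
    next
      case False then show ?thesis using A by (auto simp: pos_def_cdot intro: less_imp_le)
    qed
    also have "cdot (y - a) (A *v (y - a)) = cdot y (A *v y) - cdot y x - cdot a (A *v y) + cdot a x"
      by (simp add: matrix_vector_mult_diff_distrib cdot_diff_left cdot_diff_right Aa)
    also have "cdot a (A *v y) = cdot x y"
      by (simp add: cdot_mv hA flip: Aa)
    also have "cdot x y = cnj (cdot y x)" by (simp add: cnj_cdot)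
    finally have 1: "0 \<le> Re (cdot y (A *v y)) - 2 * Re (cdot y x) + Re (cdot a x)" by simp
    have 2: "Re (cdot y (A *v y)) \<le> Re (cdot y (B *v y))"
      using BA unfolding pos_semidef_cdot
      by (simp add: matrix_vector_mult_diff_rdistrib cdot_diff_right)
    have 3: "cdot y x = cdot x (matrix_inv B *v x)"
      by (simp add: y_def cdot_mv hiB)
    have 4: "cdot a x = cdot x (matrix_inv A *v x)"
      by (simp add: a_def cdot_mv hiA)
    have 5: "cdot y (B *v y) = cdot y x" by (simp add: By)
    have "Re (cdot x (matrix_inv B *v x)) \<le> Re (cdot x (matrix_inv A *v x))"
      using 1 2 3 4 5 by simp
    then show ?thesis by (simp add: matrix_vector_mult_diff_rdistrib cdot_diff_right)
  qed
  with herm show ?thesis by (simp add: pos_semidef_cdot)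
qed




definition sgnj :: "'a + 'b \<Rightarrow> complex" where "sgnj a = (case a of Inl _ \<Rightarrow> 1 | Inr _ \<Rightarrow> -1)"
lemma jmat_nth: "(jmat :: complex^('a::finite+'b::finite)^('a+'b)) $ i $ k = (if i = k then sgnj i else 0)"
  by (simp add: jmat_def sgnj_def)
lemma sgnj_sq: "sgnj a * sgnj a = 1" by (cases a) (auto simp: sgnj_def)
lemma jmat_sq: "(jmat :: complex^('a::finite+'b::finite)^('a+'b)) ** jmat = mat 1"
  unfolding vec_eq_iff
proof (intro allI)
  fix i j :: "'a+'b"
  have "(jmat ** jmat) $ i $ j = (\<Sum>k\<in>UNIV. (if i = k then sgnj i else 0) * (if k = j then sgnj k else 0) :: complex)"
    by (simp add: matrix_matrix_mult_def jmat_nth)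
  also have "\<dots> = (\<Sum>k\<in>UNIV. if k = i then (if i = j then sgnj i * sgnj i else 0) else 0)"
    by (rule sum.cong) auto
  also have "\<dots> = (if i = j then 1 else 0)" by (simp add: sgnj_sq)
  finally show "(jmat ** jmat) $ i $ j = mat 1 $ i $ j" by (simp add: mat_def)
qed
lemma adj_jmat: "cmat_adj (jmat :: complex^('a::finite+'b::finite)^('a+'b)) = jmat"
  by (auto simp: cmat_adj_def jmat_nth vec_eq_iff sgnj_def split: sum.split)

lemma jmat_sq': "M ** (jmat :: complex^('a::finite+'b::finite)^('a+'b)) ** jmat = M"
  by (simp add: jmat_sq flip: matrix_mul_assoc)

lemma sm_neg1[simp]: "cmat_smult (-1) M = - M"
  by (simp add: cmat_smult_def vec_eq_iff)

lemma cancel_l: "A ** X = mat 1 \<Longrightarrow> M ** A ** X = M"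
  by (simp flip: matrix_mul_assoc)

lemma lyap_step:
  fixes A X S :: "complex^'n^'n" and P :: "complex^('a::finite+'b::finite)^'n"
  assumes AX: "A ** X = mat 1" and XA: "X ** A = mat 1"
    and L: "A ** S - S ** cmat_adj A = cmat_smult \<i> (P ** jmat ** cmat_adj P)"
  defines "S' \<equiv> S + X ** S ** cmat_adj X + X ** P ** cmat_adj P ** cmat_adj X"
    and "P' \<equiv> P + cmat_smult \<i> (X ** P ** jmat)"
  shows "A ** S' - S' ** cmat_adj A = cmat_smult \<i> (P' ** jmat ** cmat_adj P')"
proof -
  have XhAh: "cmat_adj X ** cmat_adj A = mat 1" using AX by (metis adj_mult adj_mat1)
  have AhXh: "cmat_adj A ** cmat_adj X = mat 1" using XA by (metis adj_mult adj_mat1)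
  note c = cancel_l[OF AX] cancel_l[OF XA] cancel_l[OF XhAh] cancel_l[OF AhXh]
  have e1: "A ** S' = A**S + S ** cmat_adj X + P ** cmat_adj P ** cmat_adj X"
    by (simp add: S'_def matrix_add_ldistrib matrix_mul_assoc AX)
  have e2: "S' ** cmat_adj A = S ** cmat_adj A + X ** S + X ** P ** cmat_adj P"
    by (simp add: S'_def matrix_add_rdistrib c matrix_mul_assoc XhAh)
  have e3: "S ** cmat_adj X - X ** S = X ** (A ** S - S ** cmat_adj A) ** cmat_adj X"
    by (simp add: matrix_sub_ldistrib matrix_sub_rdistrib matrix_mul_assoc XA c)
  have e4: "cmat_smult \<i> (P' ** jmat ** cmat_adj P') = cmat_smult \<i> (P ** jmat ** cmat_adj P)
     + P ** cmat_adj P ** cmat_adj X - X ** P ** cmat_adj P + cmat_smult \<i> (X ** P ** jmat ** cmat_adj P ** cmat_adj X)"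
    apply (simp add: P'_def adj_add adj_sm adj_mult adj_jmat matrix_add_ldistrib matrix_add_rdistrib
       sm_mult_left sm_mult_right sm_sm sm_add matrix_mul_assoc jmat_sq')
    done
  have "A ** S' - S' ** cmat_adj A = (A**S - S**cmat_adj A) + (S ** cmat_adj X - X ** S)
      + P ** cmat_adj P ** cmat_adj X - X ** P ** cmat_adj P"
    by (simp add: e1 e2 algebra_simps)
  also have "\<dots> = cmat_smult \<i> (P ** jmat ** cmat_adj P) + X ** cmat_smult \<i> (P ** jmat ** cmat_adj P) ** cmat_adj X
      + P ** cmat_adj P ** cmat_adj X - X ** P ** cmat_adj P"
    by (simp only: e3 L)
  also have "\<dots> = cmat_smult \<i> (P' ** jmat ** cmat_adj P')"
    by (simp add: e4 sm_mult_left sm_mult_right matrix_mul_assoc algebra_simps)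
  finally show ?thesis .
qed




lemma sum_plus: "(\<Sum>c\<in>(UNIV::('a::finite+'b::finite) set). f c) = (\<Sum>a\<in>UNIV. f (Inl a)) + (\<Sum>b\<in>UNIV. f (Inr b))"
  by (subst UNIV_Plus_UNIV[symmetric], subst sum.Plus) (simp_all add: o_def)

lemma Pj_nth: "((P :: complex^('a::finite+'b::finite)^'n) ** jmat) $ r $ c = P $ r $ c * sgnj c"
proof -
  have "(P ** jmat) $ r $ c = (\<Sum>k\<in>UNIV. P $ r $ k * (if k = c then sgnj k else 0))"
    by (simp add: matrix_matrix_mult_def jmat_nth)
  also have "\<dots> = (\<Sum>k\<in>UNIV. if k = c then P $ r $ c * sgnj c else 0)"
    by (rule sum.cong) auto
  finally show ?thesis by simp
qed

lemma Pj_eq: "(P :: complex^('a::finite+'b::finite)^'n) ** jmat = (\<chi> r c. P $ r $ c * sgnj c)"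
  by (simp add: vec_eq_iff Pj_nth)

lemma block1_add: "block1 (P + Q) = block1 P + block1 Q" by (simp add: block1_def vec_eq_iff)
lemma block2_add: "block2 (P + Q) = block2 P + block2 Q" by (simp add: block2_def vec_eq_iff)
lemma block1_sm: "block1 (cmat_smult c P) = cmat_smult c (block1 P)" by (simp add: block1_def cmat_smult_def vec_eq_iff)
lemma block2_sm: "block2 (cmat_smult c P) = cmat_smult c (block2 P)" by (simp add: block2_def cmat_smult_def vec_eq_iff)
lemma block1_mult: "block1 (M ** P) = M ** block1 P" by (simp add: block1_def matrix_matrix_mult_def vec_eq_iff)
lemma block2_mult: "block2 (M ** P) = M ** block2 P" by (simp add: block2_def matrix_matrix_mult_def vec_eq_iff)
lemma block1_j: "block1 (P ** jmat) = block1 P" by (simp add: block1_def vec_eq_iff Pj_nth sgnj_def)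
lemma block2_j: "block2 (P ** jmat) = - block2 P" by (simp add: block2_def vec_eq_iff Pj_nth sgnj_def)
lemma join_blocks_eq: "join_blocks (block1 P) (block2 P) = P"
  by (simp add: join_blocks_def block1_def block2_def vec_eq_iff split: sum.split)

lemma gram_split_minus: "(P :: complex^('a::finite+'b::finite)^'n) ** cmat_adj P - P ** jmat ** cmat_adj P
   = cmat_smult 2 (block2 P ** cmat_adj (block2 P))"
  unfolding Pj_eq by (simp add: vec_eq_iff matrix_matrix_mult_def cmat_adj_def Pj_nth cmat_smult_def block2_def
     sum_plus sgnj_def sum_subtractf[symmetric] sum_distrib_left algebra_simps)

lemma gram_split_plus: "(P :: complex^('a::finite+'b::finite)^'n) ** cmat_adj P + P ** jmat ** cmat_adj P
   = cmat_smult 2 (block1 P ** cmat_adj (block1 P))"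
  unfolding Pj_eq by (simp add: vec_eq_iff matrix_matrix_mult_def cmat_adj_def Pj_nth cmat_smult_def block1_def
     sum_plus sgnj_def sum.distrib[symmetric] sum_distrib_left algebra_simps)




lemma S_step:
  fixes A X S :: "complex^'n^'n" and P :: "complex^('a::finite+'b::finite)^'n"
  assumes AX: "A ** X = mat 1" and XA: "X ** A = mat 1"
    and L: "A ** S - S ** cmat_adj A = cmat_smult \<i> (P ** jmat ** cmat_adj P)"
  defines "S' \<equiv> S + X ** S ** cmat_adj X + X ** P ** cmat_adj P ** cmat_adj X"
  shows "S' = (mat 1 + cmat_smult \<i> X) ** S ** cmat_adj (mat 1 + cmat_smult \<i> X)
      + cmat_smult 2 (X ** block2 P ** cmat_adj (block2 P) ** cmat_adj X)"
    and "S' = (mat 1 - cmat_smult \<i> X) ** S ** cmat_adj (mat 1 - cmat_smult \<i> X)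
      + cmat_smult 2 (X ** block1 P ** cmat_adj (block1 P) ** cmat_adj X)"
proof -
  have XhAh: "cmat_adj X ** cmat_adj A = mat 1" using AX by (metis adj_mult adj_mat1)
  have AhXh: "cmat_adj A ** cmat_adj X = mat 1" using XA by (metis adj_mult adj_mat1)
  note c = cancel_l[OF AX] cancel_l[OF XA] cancel_l[OF XhAh] cancel_l[OF AhXh]
  define T where "T = P ** jmat ** cmat_adj P"
  have e3: "S ** cmat_adj X - X ** S = X ** (A ** S - S ** cmat_adj A) ** cmat_adj X"
    by (simp add: matrix_sub_ldistrib matrix_sub_rdistrib matrix_mul_assoc XA c)
  have TT: "cmat_smult \<i> (X ** S) - cmat_smult \<i> (S ** cmat_adj X) = X ** T ** cmat_adj X"
  proof -
    have "cmat_smult \<i> (X ** S) - cmat_smult \<i> (S ** cmat_adj X) = - cmat_smult \<i> (S ** cmat_adj X - X ** S)"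
      by (simp add: sm_diff)
    also have "\<dots> = - cmat_smult \<i> (X ** cmat_smult \<i> T ** cmat_adj X)"
      by (simp only: e3 L T_def)
    also have "\<dots> = X ** T ** cmat_adj X"
      by (simp add: sm_mult_left sm_mult_right sm_sm)
    finally show ?thesis .
  qed
  have Ep: "(mat 1 + cmat_smult \<i> X) ** S ** cmat_adj (mat 1 + cmat_smult \<i> X)
      = S + X ** S ** cmat_adj X + (cmat_smult \<i> (X ** S) - cmat_smult \<i> (S ** cmat_adj X))"
    by (simp add: adj_add adj_sm matrix_add_ldistrib matrix_add_rdistrib matrix_sub_ldistrib matrix_sub_rdistrib sm_diff sm_add sm_mult_left sm_mult_right sm_sm
        sm_neg matrix_mul_assoc algebra_simps)
  have Em: "(mat 1 - cmat_smult \<i> X) ** S ** cmat_adj (mat 1 - cmat_smult \<i> X)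
      = S + X ** S ** cmat_adj X - (cmat_smult \<i> (X ** S) - cmat_smult \<i> (S ** cmat_adj X))"
    by (simp add: adj_diff adj_sm matrix_sub_ldistrib matrix_sub_rdistrib matrix_add_ldistrib matrix_add_rdistrib sm_add sm_diff sm_mult_left sm_mult_right sm_sm
        sm_neg matrix_mul_assoc algebra_simps)
  have G1: "X ** (P ** cmat_adj P) ** cmat_adj X - X ** T ** cmat_adj X
      = cmat_smult 2 (X ** block2 P ** cmat_adj (block2 P) ** cmat_adj X)"
  proof -
    have "X ** (P ** cmat_adj P) ** cmat_adj X - X ** T ** cmat_adj X = X ** (P ** cmat_adj P - T) ** cmat_adj X"
      by (simp add: matrix_sub_ldistrib matrix_sub_rdistrib)
    also have "\<dots> = cmat_smult 2 (X ** block2 P ** cmat_adj (block2 P) ** cmat_adj X)"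
      by (simp add: T_def gram_split_minus sm_mult_left sm_mult_right matrix_mul_assoc)
    finally show ?thesis .
  qed
  have G2: "X ** (P ** cmat_adj P) ** cmat_adj X + X ** T ** cmat_adj X
      = cmat_smult 2 (X ** block1 P ** cmat_adj (block1 P) ** cmat_adj X)"
  proof -
    have "X ** (P ** cmat_adj P) ** cmat_adj X + X ** T ** cmat_adj X = X ** (P ** cmat_adj P + T) ** cmat_adj X"
      by (simp add: matrix_add_ldistrib matrix_add_rdistrib)
    also have "\<dots> = cmat_smult 2 (X ** block1 P ** cmat_adj (block1 P) ** cmat_adj X)"
      by (simp add: T_def gram_split_plus sm_mult_left sm_mult_right matrix_mul_assoc)
    finally show ?thesis .
  qed
  have S'e: "S' = S + X ** S ** cmat_adj X + X ** (P ** cmat_adj P) ** cmat_adj X"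
    by (simp add: S'_def matrix_mul_assoc)
  show "S' = (mat 1 + cmat_smult \<i> X) ** S ** cmat_adj (mat 1 + cmat_smult \<i> X)
      + cmat_smult 2 (X ** block2 P ** cmat_adj (block2 P) ** cmat_adj X)"
    unfolding Ep TT S'e G1[symmetric] by (simp add: algebra_simps)
  show "S' = (mat 1 - cmat_smult \<i> X) ** S ** cmat_adj (mat 1 - cmat_smult \<i> X)
      + cmat_smult 2 (X ** block1 P ** cmat_adj (block1 P) ** cmat_adj X)"
    unfolding Em TT S'e G2[symmetric] by (simp add: algebra_simps)
qed




lemma RQ_step:
  fixes B S D :: "complex^'n^'n"
  assumes iB: "invertible B"
  shows "matrix_inv (cmat_pow B (Suc k)) ** (B ** S ** cmat_adj B + D) ** cmat_adj (matrix_inv (cmat_pow B (Suc k)))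
     - matrix_inv (cmat_pow B k) ** S ** cmat_adj (matrix_inv (cmat_pow B k))
     = matrix_inv (cmat_pow B (Suc k)) ** D ** cmat_adj (matrix_inv (cmat_pow B (Suc k)))"
proof -
  define N' where "N' = matrix_inv (cmat_pow B (Suc k))"
  define N where "N = matrix_inv (cmat_pow B k)"
  have "N' = matrix_inv (B ** cmat_pow B k)" by (simp add: N'_def pow_commute)
  also have "\<dots> = N ** matrix_inv B" by (simp add: N_def inv_mult iB invertible_pow)
  finally have "N' ** B = N" by (simp add: inv_left[OF iB] flip: matrix_mul_assoc)
  then have "cmat_adj B ** cmat_adj N' = cmat_adj N" by (metis adj_mult)
  then have "N' ** (B ** S ** cmat_adj B) ** cmat_adj N' = N ** S ** cmat_adj N"
    using \<open>N' ** B = N\<close> by (metis matrix_mul_assoc)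
  then have "N' ** (B ** S ** cmat_adj B + D) ** cmat_adj N' - N ** S ** cmat_adj N = N' ** D ** cmat_adj N'"
    by (simp add: matrix_add_ldistrib matrix_add_rdistrib)
  then show ?thesis unfolding N'_def N_def .
qed

lemma mv_scale: "(M::complex^'m::finite^'n::finite) *v (c *s v) = c *s (M *v v)"
  by (simp add: matrix_vector_mult_def vec_eq_iff sum_distrib_left mult_ac)

lemma polarization:
  fixes M :: "complex^'n^'n"
  shows "cdot u (M *v v) = ((cdot (u+v) (M *v (u+v)) - cdot (u-v) (M *v (u-v)))
      - \<i> * (cdot (u + \<i> *s v) (M *v (u + \<i> *s v)) - cdot (u - \<i> *s v) (M *v (u - \<i> *s v)))) / 4"
  by (simp add: cdot_add_left cdot_add_right cdot_diff_left cdot_diff_right cdot_scale_left cdot_scale_right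
      matrix_vector_right_distrib matrix_vector_mult_diff_distrib mv_scale field_simps)

lemma cdot_axis: "cdot (axis i 1) (M *v axis j 1) = (M::complex^'n^'n) $ i $ j"
proof -
  have "M *v axis j 1 = (\<chi> r. M $ r $ j)"
    by (simp add: matrix_vector_mult_def vec_eq_iff axis_def if_distrib if_distribR sum.delta' cong: if_cong)
  then show ?thesis by (simp add: cdot_def axis_def if_distrib if_distribR sum.delta' cong: if_cong)
qed




lemma dec_conv:
  fixes M :: "nat \<Rightarrow> complex^'n^'n"
  assumes pd: "\<And>k. pos_def (M k)" and dec: "\<And>k. pos_semidef (M k - M (Suc k))"
  shows "\<exists>L. M \<longlonglongrightarrow> L \<and> pos_semidef L"
proof -
  define q where "q k x = Re (cdot x (M k *v x))" for k x
  have herm: "hermitian (M k)" for k using pd[of k] by (simp add: pos_def_cdot)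
  have qreal: "cdot x (M k *v x) = of_real (q k x)" for k x
    unfolding q_def by (rule herm_quad_real[OF herm])
  have qpos: "0 \<le> q k x" for k x
  proof (cases "x = 0")
    case True then show ?thesis by (simp add: q_def cdot_def)
  next
    case False then show ?thesis using pd[of k] by (auto simp: q_def pos_def_cdot intro: less_imp_le)
  qed
  have conv: "\<exists>l. (\<lambda>k. q k x) \<longlonglongrightarrow> l" for x
  proof -
    have "decseq (\<lambda>k. q k x)"
    proof (rule decseq_SucI)
      fix k
      have "0 \<le> Re (cdot x ((M k - M (Suc k)) *v x))" using dec[of k] by (simp add: pos_semidef_cdot)
      then show "q (Suc k) x \<le> q k x"
        by (simp add: q_def matrix_vector_mult_diff_rdistrib cdot_diff_right)
    qed
    moreover have "\<forall>k. 0 \<le> q k x" using qpos by blast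
    ultimately obtain l where "(\<lambda>k. q k x) \<longlonglongrightarrow> l" using decseq_convergent by blast
    then show ?thesis by blast
  qed
  define ql where "ql x = lim (\<lambda>k. q k x)" for x
  have qlim: "(\<lambda>k. q k x) \<longlonglongrightarrow> ql x" for x
    using conv[of x] unfolding ql_def by (metis limI)
  define P where "P u v = ((of_real (ql (u+v)) - of_real (ql (u-v)))
      - \<i> * (of_real (ql (u + \<i> *s v)) - of_real (ql (u - \<i> *s v)))) / (4::complex)" for u v :: "complex^'n"
  define L where "L = (\<chi> i j. P (axis i 1) (axis j 1))"
  have ent: "(\<lambda>k. M k $ i $ j) \<longlonglongrightarrow> L $ i $ j" for i j
  proof -
    have e: "(\<lambda>k. M k $ i $ j) = (\<lambda>k. ((of_real (q k (axis i 1 + axis j 1)) - of_real (q k (axis i 1 - axis j 1)))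
      - \<i> * (of_real (q k (axis i 1 + \<i> *s axis j 1)) - of_real (q k (axis i 1 - \<i> *s axis j 1)))) / (4::complex))"
    proof (rule ext)
      fix k show "M k $ i $ j = ((of_real (q k (axis i 1 + axis j 1)) - of_real (q k (axis i 1 - axis j 1)))
      - \<i> * (of_real (q k (axis i 1 + \<i> *s axis j 1)) - of_real (q k (axis i 1 - \<i> *s axis j 1)))) / (4::complex)"
        using polarization[of "axis i 1" "M k" "axis j 1"] by (simp add: cdot_axis qreal)
    qed
    show ?thesis unfolding e L_def P_def by (simp, intro tendsto_intros qlim, simp)
  qed
  have conv_ML: "M \<longlonglongrightarrow> L"
    by (intro vec_tendstoI ent)
  have hL: "hermitian L"
  proof -
    have h: "cnj (L $ j $ i) = L $ i $ j" for i j
    proof -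
      have "(\<lambda>k. cnj (M k $ j $ i)) \<longlonglongrightarrow> cnj (L $ j $ i)" by (intro tendsto_intros ent)
      moreover have "cnj (M k $ j $ i) = M k $ i $ j" for k
      proof -
        have "cmat_adj (M k) $ i $ j = M k $ i $ j" using herm[of k] by (simp add: hermitian_def)
        then show ?thesis by (simp add: cmat_adj_def)
      qed
      ultimately show ?thesis using ent[of i j] LIMSEQ_unique by (metis (no_types, lifting) ext)
    qed
    show ?thesis by (simp add: hermitian_def cmat_adj_def vec_eq_iff h)
  qed
  have "0 \<le> Re (cdot x (L *v x))" for x
  proof -
    have "(\<lambda>k. Re (cdot x (M k *v x))) \<longlonglongrightarrow> Re (cdot x (L *v x))"
      unfolding cdot_def matrix_vector_mult_def
      by (intro tendsto_intros conv_ML)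
    moreover have "0 \<le> Re (cdot x (M k *v x))" for k
      using qpos[of k x] by (simp add: q_def)
    ultimately show ?thesis by (meson LIMSEQ_le_const)
  qed
  with hL conv_ML show ?thesis by (auto simp: pos_semidef_cdot)
qed




lemma matrix_neg_right: "(A::'a::ring_1^'n^'m) ** (- B) = - (A ** B)"
  by (simp add: matrix_matrix_mult_def vec_eq_iff sum_negf)
lemma sm_uminus: "cmat_smult c (- M) = - cmat_smult c M"
  by (simp add: cmat_smult_def vec_eq_iff)
lemma pd_psd: "pos_def M \<Longrightarrow> pos_semidef M"
proof -
  assume h: "pos_def M"
  have "0 \<le> Re (cdot x (M *v x))" for x
  proof (cases "x = 0")
    case True then show ?thesis by (simp add: cdot_def)
  next
    case False then show ?thesis using h by (auto simp: pos_def_cdot intro: less_imp_le)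
  qed
  then show ?thesis using h by (simp add: pos_def_cdot pos_semidef_cdot)
qed
lemma block1_j': "block1 (M ** P ** jmat) = M ** block1 P"
  by (metis matrix_mul_assoc block1_j block1_mult)
lemma block2_j': "block2 (M ** P ** jmat) = - (M ** block2 P)"
  by (metis matrix_mul_assoc block2_j block2_mult)

lemma psd2: "pos_semidef (cmat_smult 2 (C ** cmat_adj C))"
  using psd_smult[OF psd_gram, of 2 C] by simp

theorem mainTheorem3:
  fixes A S0 :: "complex^'n^'n" and Pi0 :: "complex^('m1::finite + 'm2::finite)^'n"
  assumes adm: "admissible_triple A S0 Pi0"
    and spec: "\<i> \<notin> cmat_spectrum A" "- \<i> \<notin> cmat_spectrum A"
  shows "(\<forall>k. Pi_seq A Pi0 k =
            join_blocks (cmat_pow (Bp A) k ** block1 Pi0) (cmat_pow (Bm A) k ** block2 Pi0))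
    \<and> (\<forall>k. R_seq A S0 Pi0 (Suc k) - R_seq A S0 Pi0 k =
            cmat_smult 2 (matrix_inv (cmat_pow (Bp A) (Suc k)) ** matrix_inv A
              ** cmat_pow (Bm A) k ** block2 Pi0 ** cmat_adj (block2 Pi0)
              ** cmat_adj (cmat_pow (Bm A) k) ** cmat_adj (matrix_inv A)
              ** cmat_adj (matrix_inv (cmat_pow (Bp A) (Suc k))))
          \<and> pos_semidef (R_seq A S0 Pi0 (Suc k) - R_seq A S0 Pi0 k))
    \<and> (\<forall>k. pos_semidef (Q_seq A S0 Pi0 (Suc k) - Q_seq A S0 Pi0 k))
    \<and> (\<exists>\<kappa>R. (\<lambda>k. matrix_inv (R_seq A S0 Pi0 k)) \<longlonglongrightarrow> \<kappa>R \<and> pos_semidef \<kappa>R)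
    \<and> (\<exists>\<kappa>Q. (\<lambda>k. matrix_inv (Q_seq A S0 Pi0 k)) \<longlonglongrightarrow> \<kappa>Q \<and> pos_semidef \<kappa>Q)"
proof -
  have dA: "det A \<noteq> 0" and S0pd: "pos_def S0"
    and L0: "A ** S0 - S0 ** cmat_adj A = cmat_smult \<i> (Pi0 ** jmat ** cmat_adj Pi0)"
    using adm by (auto simp: admissible_triple_def)
  have iA: "invertible A" using dA invertible_det_nz by blast
  let ?X = "matrix_inv A"
  have AX: "A ** ?X = mat 1" and XA: "?X ** A = mat 1" using inv_right[OF iA] inv_left[OF iA] by auto
  let ?P = "Pi_seq A Pi0" and ?S = "S_seq A S0 Pi0"
  have Psuc: "?P (Suc k) = ?P k + cmat_smult \<i> (?X ** ?P k ** jmat)" for k by simp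
  have Ssuc: "?S (Suc k) = ?S k + ?X ** ?S k ** cmat_adj ?X + ?X ** ?P k ** cmat_adj (?P k) ** cmat_adj ?X" for k
    by (simp add: inv_adj[OF iA])
  have lyap: "A ** ?S k - ?S k ** cmat_adj A = cmat_smult \<i> (?P k ** jmat ** cmat_adj (?P k))" for k
  proof (induction k)
    case 0 then show ?case using L0 by simp
  next
    case (Suc k)
    show ?case using lyap_step[OF AX XA Suc.IH] by (simp only: Ssuc Psuc)
  qed
  have b1: "block1 (?P k) = cmat_pow (Bp A) k ** block1 Pi0" for k
  proof (induction k)
    case 0 then show ?case by simp
  next
    case (Suc k)
    have "block1 (?P (Suc k)) = block1 (?P k) + cmat_smult \<i> (?X ** block1 (?P k))"
      by (simp only: Psuc block1_add block1_sm block1_j')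
    also have "\<dots> = Bp A ** block1 (?P k)"
      by (simp add: Bp_def matrix_add_rdistrib sm_mult_left)
    also have "\<dots> = cmat_pow (Bp A) (Suc k) ** block1 Pi0"
      by (simp only: Suc.IH cmat_pow.simps pow_commute matrix_mul_assoc)
    finally show ?case .
  qed
  have b2: "block2 (?P k) = cmat_pow (Bm A) k ** block2 Pi0" for k
  proof (induction k)
    case 0 then show ?case by simp
  next
    case (Suc k)
    have "block2 (?P (Suc k)) = block2 (?P k) + cmat_smult \<i> (- (?X ** block2 (?P k)))"
      by (simp only: Psuc block2_add block2_sm block2_j')
    also have "\<dots> = Bm A ** block2 (?P k)"
      by (simp add: Bm_def matrix_sub_rdistrib sm_mult_left sm_uminus)
    also have "\<dots> = cmat_pow (Bm A) (Suc k) ** block2 Pi0"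
      by (simp only: Suc.IH cmat_pow.simps pow_commute matrix_mul_assoc)
    finally show ?case .
  qed
  have part1: "\<forall>k. ?P k = join_blocks (cmat_pow (Bp A) k ** block1 Pi0) (cmat_pow (Bm A) k ** block2 Pi0)"
    by (simp add: b1[symmetric] b2[symmetric] join_blocks_eq)
  have Sp: "?S (Suc k) = Bp A ** ?S k ** cmat_adj (Bp A)
      + cmat_smult 2 (?X ** block2 (?P k) ** cmat_adj (block2 (?P k)) ** cmat_adj ?X)" for k
    using S_step(1)[OF AX XA lyap[of k]] by (simp only: Ssuc Bp_def)
  have Sm: "?S (Suc k) = Bm A ** ?S k ** cmat_adj (Bm A)
      + cmat_smult 2 (?X ** block1 (?P k) ** cmat_adj (block1 (?P k)) ** cmat_adj ?X)" for k
    using S_step(2)[OF AX XA lyap[of k]] by (simp only: Ssuc Bm_def)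
  have iX: "invertible ?X" using invertible_inv[OF iA] .
  have iBp: "invertible (Bp A)"
  proof -
    have "Bp A = ?X ** (A - cmat_smult (- \<i>) (mat 1))"
      by (simp add: Bp_def matrix_sub_ldistrib matrix_add_ldistrib XA sm_mult_right sm_neg)
    moreover have "invertible (A - cmat_smult (- \<i>) (mat 1))"
      using spec(2) by (simp add: cmat_spectrum_def invertible_det_nz)
    ultimately show ?thesis using iX invertible_mult by metis
  qed
  have iBm: "invertible (Bm A)"
  proof -
    have "Bm A = ?X ** (A - cmat_smult \<i> (mat 1))"
      by (simp add: Bm_def matrix_sub_ldistrib XA sm_mult_right)
    moreover have "invertible (A - cmat_smult \<i> (mat 1))"
      using spec(1) by (simp add: cmat_spectrum_def invertible_det_nz)
    ultimately show ?thesis using iX invertible_mult by metis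
  qed
  let ?Np = "\<lambda>k. matrix_inv (cmat_pow (Bp A) k)" and ?Nm = "\<lambda>k. matrix_inv (cmat_pow (Bm A) k)"
  have Rform: "R_seq A S0 Pi0 k = ?Np k ** ?S k ** cmat_adj (?Np k)" for k
  proof -
    have "mat 1 - cmat_smult \<i> (matrix_inv (cmat_adj A)) = cmat_adj (Bp A)"
      by (simp add: Bp_def adj_add adj_sm inv_adj[OF iA] sm_neg)
    then show ?thesis
      by (simp add: R_seq_def adj_pow inv_adj invertible_pow iBp)
  qed
  have Qform: "Q_seq A S0 Pi0 k = ?Nm k ** ?S k ** cmat_adj (?Nm k)" for k
  proof -
    have "mat 1 + cmat_smult \<i> (matrix_inv (cmat_adj A)) = cmat_adj (Bm A)"
      by (simp add: Bm_def adj_diff adj_sm inv_adj[OF iA] sm_neg)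
    then show ?thesis
      by (simp add: Q_seq_def adj_pow inv_adj invertible_pow iBm)
  qed
  have Rdiff: "R_seq A S0 Pi0 (Suc k) - R_seq A S0 Pi0 k =
      ?Np (Suc k) ** cmat_smult 2 (?X ** block2 (?P k) ** cmat_adj (block2 (?P k)) ** cmat_adj ?X) ** cmat_adj (?Np (Suc k))" for k
    unfolding Rform Sp[of k] by (rule RQ_step[OF iBp])
  have Qdiff: "Q_seq A S0 Pi0 (Suc k) - Q_seq A S0 Pi0 k =
      ?Nm (Suc k) ** cmat_smult 2 (?X ** block1 (?P k) ** cmat_adj (block1 (?P k)) ** cmat_adj ?X) ** cmat_adj (?Nm (Suc k))" for k
    unfolding Qform Sm[of k] by (rule RQ_step[OF iBm])
  have gramform: "N ** cmat_smult 2 (?X ** Y ** cmat_adj Y ** cmat_adj ?X) ** cmat_adj N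
      = cmat_smult 2 ((N ** ?X ** Y) ** cmat_adj (N ** ?X ** Y))" for N :: "complex^'n^'n" and Y :: "complex^'c::finite^'n"
    by (simp add: sm_mult_left sm_mult_right adj_mult matrix_mul_assoc)
  have Rpsd: "pos_semidef (R_seq A S0 Pi0 (Suc k) - R_seq A S0 Pi0 k)" for k
    unfolding Rdiff gramform by (rule psd2)
  have Qpsd: "pos_semidef (Q_seq A S0 Pi0 (Suc k) - Q_seq A S0 Pi0 k)" for k
    unfolding Qdiff gramform by (rule psd2)
  have Rformula: "R_seq A S0 Pi0 (Suc k) - R_seq A S0 Pi0 k =
            cmat_smult 2 (matrix_inv (cmat_pow (Bp A) (Suc k)) ** matrix_inv A
              ** cmat_pow (Bm A) k ** block2 Pi0 ** cmat_adj (block2 Pi0)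
              ** cmat_adj (cmat_pow (Bm A) k) ** cmat_adj (matrix_inv A)
              ** cmat_adj (matrix_inv (cmat_pow (Bp A) (Suc k))))" for k
    unfolding Rdiff b2 by (simp add: sm_mult_left sm_mult_right adj_mult matrix_mul_assoc)
  have Spd: "pos_def (?S k)" for k
  proof (induction k)
    case 0 then show ?case using S0pd by simp
  next
    case (Suc k)
    have "?X ** ?P k ** cmat_adj (?P k) ** cmat_adj ?X = (?X ** ?P k) ** cmat_adj (?X ** ?P k)"
      by (simp add: adj_mult matrix_mul_assoc)
    then have "pos_semidef (?X ** ?P k ** cmat_adj (?P k) ** cmat_adj ?X)" using psd_gram by metis
    moreover have "pos_semidef (?X ** ?S k ** cmat_adj ?X)" using psd_congr[OF pd_psd[OF Suc.IH]] .
    ultimately show ?case unfolding Ssuc using Suc.IH pd_add_psd by metis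
  qed
  have Rpd: "pos_def (R_seq A S0 Pi0 k)" for k
    unfolding Rform using pd_congr[OF Spd invertible_inv[OF invertible_pow[OF iBp]]] .
  have Qpd: "pos_def (Q_seq A S0 Pi0 k)" for k
    unfolding Qform using pd_congr[OF Spd invertible_inv[OF invertible_pow[OF iBm]]] .
  have limR: "\<exists>\<kappa>R. (\<lambda>k. matrix_inv (R_seq A S0 Pi0 k)) \<longlonglongrightarrow> \<kappa>R \<and> pos_semidef \<kappa>R"
    by (rule dec_conv) (auto intro: pd_inv Rpd inv_antitone Rpsd)
  have limQ: "\<exists>\<kappa>Q. (\<lambda>k. matrix_inv (Q_seq A S0 Pi0 k)) \<longlonglongrightarrow> \<kappa>Q \<and> pos_semidef \<kappa>Q"
    by (rule dec_conv) (auto intro: pd_inv Qpd inv_antitone Qpsd)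
  show ?thesis using part1 Rformula Rpsd Qpsd limR limQ by blast
qed


end
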